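(* Let $Q_\infty=(q_0,q_1,q_2,\dots)$ be any infinite stochastic vector with positive coordinates, fix a GLS-expansion with cylinder lengths given by $Q_\infty$, and let $V=\{i_1,i_2,\dots,i_k,i_{k+1},\dots\}\subset\mathbb{N}_0$. Then \[\dim_H\bigl(C[\mathit{GLS},V]\bigr)=\sup\Bigl\{x:\ \sum_{i\in V} q_i^x\ge 1\Bigr\}.\]
   Context: GLS-expansion: Let $Q_\infty=(q_0,q_1,\dots)$ be a stochastic vector with positive coordinates ($q_i>0$, $\sum_{i\ge 0} q_i=1$). Choose closed intervals $\Delta_i=[a_i,b_i]\subset[0,1]$, $i\in\mathbb{N}_0$, with pairwise disjoint interiors and $|\Delta_i|=q_i$ (cylinders of rank 1). Let $f_i:[0,1]\to\Delta_i$ be the increasing affine bijection. The cylinders of rank $n$ are $\Delta_{i_1i_2\dots i_n}=f_{i_1}\circ\dots\circ f_{i_n}([0,1])$, so the placement of $\Delta_{i_1\dots i_n}$ inside $\Delta_{i_1\dots i_{n-1}}$ is the same as that of $\Delta_{i_n}$ inside $[0,1]$ and $|\Delta_{i_1\dots i_n}|=q_{i_1}\cdots q_{i_n}$. For any sequence $(i_k)$ in $\mathbb{N}_0$, $\bigcap_k \Delta_{i_1\dots i_k}$ is a single point, denoted $\Delta^{\mathit{GLS}}_{i_1i_2\dots}$. For $V\subset\mathbb{N}_0$, $C[\mathit{GLS},V]=\{\Delta^{\mathit{GLS}}_{\alpha_1\alpha_2\dots}:\ \alpha_k\in V \text{ for all } k\}$. In the supremum, $x$ ranges over real numbers and the series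 $\sum_{i\in V}q_i^x$ is allowed to take the value $+\infty$. *)

theory Defs
  imports "HOL-Analysis.Analysis"
begin

definition hausdorff_pre :: "real \<Rightarrow> real \<Rightarrow> real set \<Rightarrow> ennreal" where
  "hausdorff_pre s \<delta> A =
     (INF U \<in> {U :: nat \<Rightarrow> real set. A \<subseteq> (\<Union>n. U n) \<and>
                   (\<forall>n. bounded (U n) \<and> diameter (U n) \<le> \<delta>)}.
        (\<Sum>n. ennreal (diameter (U n) powr s)))"

definition hausdorff_measure :: "real \<Rightarrow> real set \<Rightarrow> ennreal" where
  "hausdorff_measure s A = (SUP \<delta> \<in> {0<..}. hausdorff_pre s \<delta> A)"

definition hausdorff_dim :: "real set \<Rightarrow> ereal" where
  "hausdorff_dim A = (INF s \<in> {s. 0 \<le> s \<and> hausdorff_measure s A = 0}. ereal s)"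

definition gls_map :: "(nat \<Rightarrow> real) \<Rightarrow> (nat \<Rightarrow> real) \<Rightarrow> nat \<Rightarrow> real \<Rightarrow> real" where
  "gls_map q a i x = a i + q i * x"

definition gls_cylinder :: "(nat \<Rightarrow> real) \<Rightarrow> (nat \<Rightarrow> real) \<Rightarrow> nat list \<Rightarrow> real set" where
  "gls_cylinder q a ws = foldr (\<lambda>i g. gls_map q a i \<circ> g) ws id ` {0..1}"

text \<open>The point with GLS-digit sequence alpha (alpha 0 is the first digit):
  the unique point of the intersection of the nested cylinders.\<close>
definition gls_point :: "(nat \<Rightarrow> real) \<Rightarrow> (nat \<Rightarrow> real) \<Rightarrow> (nat \<Rightarrow> nat) \<Rightarrow> real" where
  "gls_point q a \<alpha> = (THE x. x \<in> (\<Inter>n. gls_cylinder q a (map \<alpha> [0..<n])))"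

definition gls_set :: "(nat \<Rightarrow> real) \<Rightarrow> (nat \<Rightarrow> real) \<Rightarrow> nat set \<Rightarrow> real set" where
  "gls_set q a V = {gls_point q a \<alpha> | \<alpha>. \<forall>k. \<alpha> k \<in> V}"

end

theory Submission
  imports Defs "HOL-Library.Sublist"
begin


definition phi :: "(nat \<Rightarrow> real) \<Rightarrow> (nat \<Rightarrow> real) \<Rightarrow> nat list \<Rightarrow> real \<Rightarrow> real" where
  "phi q a ws = foldr (\<lambda>i g. gls_map q a i \<circ> g) ws id"

definition Ln :: "(nat \<Rightarrow> real) \<Rightarrow> nat list \<Rightarrow> real" where
  "Ln q ws = prod_list (map q ws)"

definition cc :: "(nat \<Rightarrow> real) \<Rightarrow> (nat \<Rightarrow> real) \<Rightarrow> nat list \<Rightarrow> real" where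
  "cc q a ws = phi q a ws 0"

lemma phi_Nil[simp]: "phi q a [] = id" by (simp add: phi_def)
lemma phi_Cons[simp]: "phi q a (i#ws) = gls_map q a i \<circ> phi q a ws" by (simp add: phi_def)
lemma phi_append: "phi q a (ws @ us) = phi q a ws \<circ> phi q a us"
  by (induction ws) (simp_all add: comp_assoc)
lemma Ln_Nil[simp]: "Ln q [] = 1" by (simp add: Ln_def)
lemma Ln_Cons[simp]: "Ln q (i#ws) = q i * Ln q ws" by (simp add: Ln_def)
lemma Ln_append: "Ln q (ws @ us) = Ln q ws * Ln q us" by (simp add: Ln_def)

lemma phi_affine0: "phi q a ws x = phi q a ws 0 + Ln q ws * x"
proof (induction ws arbitrary: x)
  case Nil then show ?case by simp
next
  case (Cons i ws)
  have "phi q a (i#ws) x = a i + q i * phi q a ws x" by (simp add: gls_map_def)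
  also have "\<dots> = a i + q i * (phi q a ws 0 + Ln q ws * x)" by (simp only: Cons.IH[of x])
  finally show ?case by (simp add: gls_map_def algebra_simps)
qed

lemma phi_affine: "phi q a ws x = cc q a ws + Ln q ws * x"
  unfolding cc_def by (rule phi_affine0)

lemma cc_Nil[simp]: "cc q a [] = 0" by (simp add: cc_def)
lemma cc_Cons: "cc q a (i#ws) = a i + q i * cc q a ws"
  by (simp add: cc_def gls_map_def)
lemma cc_append: "cc q a (ws @ us) = cc q a ws + Ln q ws * cc q a us"
  unfolding cc_def phi_append comp_def by (rule phi_affine0)

lemma Ln_pos: "(\<And>i. q i > 0) \<Longrightarrow> Ln q ws > 0"
  by (induction ws) auto

lemma cyl_eq:
  assumes "\<And>i. q i > 0"
  shows "gls_cylinder q a ws = {cc q a ws .. cc q a ws + Ln q ws}"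
proof -
  have L: "Ln q ws > 0" using Ln_pos assms by blast
  have e: "phi q a ws = (\<lambda>x. Ln q ws * x + cc q a ws)"
    by (rule ext) (simp add: phi_affine)
  have "gls_cylinder q a ws = phi q a ws ` {0..1}"
    by (simp add: gls_cylinder_def phi_def)
  also have "\<dots> = {cc q a ws .. cc q a ws + Ln q ws}"
    unfolding e image_affinity_atLeastAtMost using L by (simp add: add.commute)
  finally show ?thesis .
qed

lemma cyl_unit:
  assumes "\<And>i. q i > 0" "\<And>i. 0 \<le> a i \<and> a i + q i \<le> 1"
  shows "0 \<le> cc q a ws \<and> cc q a ws + Ln q ws \<le> 1"
proof (induction ws)
  case Nil then show ?case by simp
next
  case (Cons i ws)
  have "q i * (cc q a ws + Ln q ws) \<le> q i" using Cons assms(1)[of i]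
    by (simp add: mult_left_le)
  then show ?case using Cons assms[of i]
    by (auto simp: cc_Cons algebra_simps)
qed

lemma cyl_sub:
  assumes "\<And>i. q i > 0" "\<And>i. 0 \<le> a i \<and> a i + q i \<le> 1"
  shows "cc q a ws \<le> cc q a (ws @ us) \<and> cc q a (ws @ us) + Ln q (ws @ us) \<le> cc q a ws + Ln q ws"
proof -
  have L: "Ln q ws > 0" using Ln_pos assms by blast
  have u: "0 \<le> cc q a us \<and> cc q a us + Ln q us \<le> 1" using cyl_unit assms by blast
  have "Ln q ws * (cc q a us + Ln q us) \<le> Ln q ws" using L u by (simp add: mult_left_le)
  then show ?thesis using L u by (auto simp: cc_append Ln_append algebra_simps)
qed

lemma Ln_le_pow:
  assumes "\<And>i. q i > 0" "\<And>i. q i \<le> r"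
  shows "Ln q ws \<le> r ^ length ws"
proof (induction ws)
  case Nil then show ?case by simp
next
  case (Cons i ws)
  have "q i * Ln q ws \<le> r * r ^ length ws"
    using Cons assms[of i] Ln_pos[of q ws] assms(1) by (intro mult_mono) (auto intro: order_trans[OF less_imp_le[OF assms(1)[of i]]])
  then show ?case by simp
qed

lemma pfx_split: "m \<le> n \<Longrightarrow> map \<alpha> [0..<n] = map \<alpha> [0..<m] @ map \<alpha> [m..<n]"
  by (metis le_add_diff_inverse map_append upt_add_eq_append zero_le)

lemma gls_point_in:
  assumes qp: "\<And>i. q i > 0" and iv: "\<And>i. 0 \<le> a i \<and> a i + q i \<le> 1"
    and qr: "\<And>i. q i \<le> r" and r1: "r < 1"
  shows "gls_point q a \<alpha> \<in> gls_cylinder q a (map \<alpha> [0..<n])"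
proof -
  define P where "P n = map \<alpha> [0..<n]" for n
  have nest: "cc q a (P m) \<le> cc q a (P n) \<and> cc q a (P n) + Ln q (P n) \<le> cc q a (P m) + Ln q (P m)"
    if "m \<le> n" for m n
    using cyl_sub[OF qp iv, where ws="P m" and us="map \<alpha> [m..<n]"] pfx_split[OF that, where \<alpha>=\<alpha>] by (simp add: P_def)
  have Lp: "Ln q ws > 0" for ws using Ln_pos qp by blast
  have bnd: "cc q a (P n) \<le> cc q a (P m) + Ln q (P m)" for n m
  proof (cases "m \<le> n")
    case True then show ?thesis using nest[OF True] Lp[of "P n"] by linarith
  next
    case False then show ?thesis using nest[of n m] Lp[of "P m"] by linarith
  qed
  define x where "x = (SUP n. cc q a (P n))"
  have bdd: "bdd_above (range (\<lambda>n. cc q a (P n)))"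
    using bnd by (intro bdd_aboveI2) blast
  have xin: "x \<in> gls_cylinder q a (P n)" for n
  proof -
    have "cc q a (P n) \<le> x" unfolding x_def by (rule cSUP_upper[OF _ bdd]) simp
    moreover have "x \<le> cc q a (P n) + Ln q (P n)" unfolding x_def using bnd
      by (intro cSUP_least) auto
    ultimately show ?thesis by (simp add: cyl_eq[OF qp])
  qed
  have uniq: "y = x" if "y \<in> (\<Inter>n. gls_cylinder q a (P n))" for y
  proof (rule ccontr)
    assume "y \<noteq> x"
    then have "\<bar>y - x\<bar> > 0" by simp
    then obtain n where n: "r ^ n < \<bar>y - x\<bar>" using real_arch_pow_inv r1 by blast
    have "y \<in> gls_cylinder q a (P n)" using that by blast
    then have "\<bar>y - x\<bar> \<le> Ln q (P n)" using xin[of n] by (auto simp: cyl_eq[OF qp])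
    also have "\<dots> \<le> r ^ n" using Ln_le_pow[OF qp qr, where ws="P n"] by (simp add: P_def)
    finally show False using n by simp
  qed
  have "gls_point q a \<alpha> = x" unfolding gls_point_def
    using xin uniq unfolding P_def by (intro the_equality) auto
  then show ?thesis using xin P_def by simp
qed

lemma in_branch:
  assumes qp: "\<And>i. q i > 0" and iv: "\<And>i. 0 \<le> a i \<and> a i + q i \<le> 1"
    and z: "cc q a (p @ i # u) < z" "z < cc q a (p @ i # u) + Ln q (p @ i # u)"
  shows "a i < (z - cc q a p) / Ln q p \<and> (z - cc q a p) / Ln q p < a i + q i"
proof -
  define y where "y = (z - cc q a p) / Ln q p"
  have Lp: "Ln q p > 0" using Ln_pos qp by blast
  have zy: "z = cc q a p + Ln q p * y" using Lp by (simp add: y_def)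
  have u: "0 \<le> cc q a u \<and> cc q a u + Ln q u \<le> 1" using cyl_unit[where q=q and a=a and ws=u, OF qp iv] by blast
  have qi: "q i > 0" using qp by blast
  have "Ln q p * (a i + q i * cc q a u) < Ln q p * y"
    using z(1) by (simp add: zy cc_append cc_Cons)
  then have y1: "a i + q i * cc q a u < y" using Lp by simp
  have "Ln q p * y < Ln q p * (a i + q i * (cc q a u + Ln q u))"
    using z(2) by (simp add: zy cc_append cc_Cons Ln_append algebra_simps)
  then have y2: "y < a i + q i * (cc q a u + Ln q u)" using Lp by simp
  have "q i * (cc q a u + Ln q u) \<le> q i" using u qi by (simp add: mult_left_le)
  moreover have "0 \<le> q i * cc q a u" using u qi by simp
  ultimately show ?thesis using y1 y2 unfolding y_def[symmetric] by linarith
qed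

lemma branch_disj:
  assumes qp: "\<And>i. q i > 0" and iv: "\<And>i. 0 \<le> a i \<and> a i + q i \<le> 1"
    and disj: "\<And>i j. i \<noteq> j \<Longrightarrow> {a i<..<a i + q i} \<inter> {a j<..<a j + q j} = {}"
    and ij: "i \<noteq> j"
  shows "{cc q a (p @ i # u) <..< cc q a (p @ i # u) + Ln q (p @ i # u)} \<inter>
         {cc q a (p @ j # v) <..< cc q a (p @ j # v) + Ln q (p @ j # v)} = {}"
proof (rule ccontr)
  assume "\<not> ?thesis"
  then obtain z where "z \<in> {cc q a (p @ i # u) <..< cc q a (p @ i # u) + Ln q (p @ i # u)} \<inter>
         {cc q a (p @ j # v) <..< cc q a (p @ j # v) + Ln q (p @ j # v)}" by blast
  then have z1: "cc q a (p @ i # u) < z" "z < cc q a (p @ i # u) + Ln q (p @ i # u)"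
    and z2: "cc q a (p @ j # v) < z" "z < cc q a (p @ j # v) + Ln q (p @ j # v)" by auto
  have "(z - cc q a p) / Ln q p \<in> {a i<..<a i + q i} \<inter> {a j<..<a j + q j}"
    using in_branch[OF qp iv z1] in_branch[OF qp iv z2] by auto
  then show False using disj[OF ij] by blast
qed

lemma sum_len_le:
  fixes c l :: "'a \<Rightarrow> real"
  assumes G: "finite G" and AB: "A \<le> B"
    and box: "\<And>w. w \<in> G \<Longrightarrow> 0 \<le> l w \<and> A \<le> c w \<and> c w + l w \<le> B"
    and dj: "\<And>w w'. w \<in> G \<Longrightarrow> w' \<in> G \<Longrightarrow> w \<noteq> w' \<Longrightarrow>
                {c w<..<c w + l w} \<inter> {c w'<..<c w' + l w'} = {}"
  shows "(\<Sum>w\<in>G. l w) \<le> B - A"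
proof -
  have "ennreal (\<Sum>w\<in>G. l w) = (\<Sum>w\<in>G. ennreal (l w))"
    using box by (intro sum_ennreal[symmetric]) auto
  also have "\<dots> = (\<Sum>w\<in>G. emeasure lborel {c w<..<c w + l w})"
    using box by (intro sum.cong) auto
  also have "\<dots> = emeasure lborel (\<Union>w\<in>G. {c w<..<c w + l w})"
    using G dj by (intro sum_emeasure) (auto simp: disjoint_family_on_def)
  also have "\<dots> \<le> emeasure lborel {A..B}"
  proof (rule emeasure_mono)
    show "(\<Union>w\<in>G. {c w<..<c w + l w}) \<subseteq> {A..B}"
    proof
      fix z assume "z \<in> (\<Union>w\<in>G. {c w<..<c w + l w})"
      then obtain w where "w \<in> G" "c w < z" "z < c w + l w" by auto
      then show "z \<in> {A..B}" using box[of w] by auto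
    qed
  qed simp
  also have "\<dots> = ennreal (B - A)" using AB by simp
  finally show ?thesis using AB by (simp add: ennreal_le_iff)
qed



definition words :: "nat set \<Rightarrow> nat \<Rightarrow> nat list set" where
  "words F n = {xs. set xs \<subseteq> F \<and> length xs = n}"

lemma finite_words: "finite F \<Longrightarrow> finite (words F n)"
  unfolding words_def by (rule finite_lists_length_eq)

lemma words_Suc: "words F (Suc n) = (\<lambda>(i,v). i # v) ` (F \<times> words F n)"
  unfolding words_def
  by (auto simp: length_Suc_conv image_iff)

lemma take_prefix: "take k x = take (min k (length x)) (x @ z)"
  by (simp add: min_def)

lemma konig:
  assumes F: "finite F"
    and cov: "\<And>\<alpha>. (\<And>k. \<alpha> k \<in> F) \<Longrightarrow> \<exists>n. map \<alpha> [0..<n] \<in> W"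
  shows "\<exists>N. \<forall>v\<in>words F N. \<exists>k. take k v \<in> W"
proof (rule ccontr)
  assume neg: "\<not> ?thesis"
  define P where "P w \<longleftrightarrow> set w \<subseteq> F \<and> (\<forall>N. \<exists>v \<in> words F N. \<forall>k. take k (w @ v) \<notin> W)" for w
  have P0: "P []" using neg by (auto simp: P_def)
  have step: "\<exists>i\<in>F. P (w @ [i])" if Pw: "P w" for w
  proof (rule ccontr)
    assume "\<not> ?thesis"
    then have "\<forall>i\<in>F. \<exists>N. \<forall>v\<in>words F N. \<exists>k. take k (w @ [i] @ v) \<in> W"
      using Pw by (auto simp: P_def)
    then obtain Nf where Nf: "\<And>i v. i \<in> F \<Longrightarrow> v \<in> words F (Nf i) \<Longrightarrow> \<exists>k. take k (w @ [i] @ v) \<in> W"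
      by metis
    define N where "N = Suc (\<Sum>i\<in>F. Nf i)"
    obtain v where v: "v \<in> words F N" and nv: "\<And>k. take k (w @ v) \<notin> W"
      using Pw unfolding P_def by blast
    obtain i v' where vi: "v = i # v'" using v by (cases v) (auto simp: words_def N_def)
    have iF: "i \<in> F" and v'F: "set v' \<subseteq> F" and lv': "length v' = (\<Sum>i\<in>F. Nf i)"
      using v vi by (auto simp: words_def N_def)
    have "Nf i \<le> (\<Sum>i\<in>F. Nf i)" using F iF by (intro member_le_sum) auto
    then have "take (Nf i) v' \<in> words F (Nf i)" using v'F lv'
      by (auto simp: words_def dest: in_set_takeD)
    then obtain k where "take k (w @ [i] @ take (Nf i) v') \<in> W" using Nf iF by blast
    moreover have "w @ v = (w @ [i] @ take (Nf i) v') @ drop (Nf i) v'" by (simp add: vi)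
    ultimately have "take (min k (length (w @ [i] @ take (Nf i) v'))) (w @ v) \<in> W"
      by (metis take_prefix)
    then show False using nv by blast
  qed
  define \<alpha> where "\<alpha> w = (SOME i. i \<in> F \<and> P (w @ [i]))" for w
  define ws where "ws = rec_nat [] (\<lambda>n w. w @ [\<alpha> w])"
  have ws0: "ws 0 = []" and wsS: "ws (Suc n) = ws n @ [\<alpha> (ws n)]" for n
    by (simp_all add: ws_def)
  have Pws: "P (ws n)" for n
  proof (induction n)
    case 0 then show ?case using P0 ws0 by simp
  next
    case (Suc n)
    then have "\<alpha> (ws n) \<in> F \<and> P (ws n @ [\<alpha> (ws n)])"
      unfolding \<alpha>_def using step[OF Suc] by (metis (mono_tags, lifting) someI_ex)
    then show ?case using wsS by simp
  qed
  define \<beta> where "\<beta> n = \<alpha> (ws n)" for n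
  have \<beta>F: "\<beta> k \<in> F" for k
    unfolding \<beta>_def \<alpha>_def using step[OF Pws[of k]] by (metis (mono_tags, lifting) someI_ex)
  have wsm: "ws n = map \<beta> [0..<n]" for n
    by (induction n) (simp_all add: ws0 wsS \<beta>_def)
  obtain n where "map \<beta> [0..<n] \<in> W" using cov \<beta>F by blast
  then have "take n (ws n @ []) \<in> W" by (simp add: wsm)
  moreover have w0: "words F 0 = {[]}" by (auto simp: words_def)
  have "\<exists>v\<in>words F 0. \<forall>k. take k (ws n @ v) \<notin> W" using Pws[of n] unfolding P_def by blast
  then have "\<forall>k. take k (ws n @ []) \<notin> W" unfolding w0 by blast
  ultimately show False by blast
qed

lemma words_sum:
  assumes qp: "\<And>i. q i > 0" and F: "finite F" and s1: "(\<Sum>i\<in>F. q i powr t) = 1"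
  shows "(\<Sum>v\<in>words F N. Ln q v powr t) = 1"
proof (induction N)
  case 0
  have "words F 0 = {[]}" by (auto simp: words_def)
  then show ?case by simp
next
  case (Suc N)
  have inj: "inj_on (\<lambda>(i,v). i # v) (F \<times> words F N)" by (auto simp: inj_on_def)
  have "(\<Sum>v\<in>words F (Suc N). Ln q v powr t) = (\<Sum>(i,v)\<in>F \<times> words F N. Ln q (i # v) powr t)"
    unfolding words_Suc by (subst sum.reindex[OF inj]) (simp add: case_prod_unfold)
  also have "\<dots> = (\<Sum>(i,v)\<in>F \<times> words F N. q i powr t * Ln q v powr t)"
    using qp Ln_pos[OF qp] by (intro sum.cong refl) (auto simp: powr_mult less_imp_le)
  also have "\<dots> = (\<Sum>i\<in>F. q i powr t) * (\<Sum>v\<in>words F N. Ln q v powr t)"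
    by (simp add: sum_product sum.cartesian_product)
  finally show ?case using s1 Suc by simp
qed

lemma group_sum:
  assumes qp: "\<And>i. q i > 0" and F: "finite F" and s1: "(\<Sum>i\<in>F. q i powr t) = 1"
    and w: "set w \<subseteq> F" "length w \<le> N"
  shows "(\<Sum>v\<in>{v\<in>words F N. take (length w) v = w}. Ln q v powr t) = Ln q w powr t"
proof -
  have eq: "{v\<in>words F N. take (length w) v = w} = (\<lambda>u. w @ u) ` words F (N - length w)"
  proof (intro equalityI subsetI)
    fix v assume v: "v \<in> {v\<in>words F N. take (length w) v = w}"
    then have "v = w @ drop (length w) v" by (metis (mono_tags, lifting) append_take_drop_id mem_Collect_eq)
    moreover have "drop (length w) v \<in> words F (N - length w)"
      using v by (auto simp: words_def dest: in_set_dropD)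
    ultimately show "v \<in> (\<lambda>u. w @ u) ` words F (N - length w)" by blast
  next
    fix v assume "v \<in> (\<lambda>u. w @ u) ` words F (N - length w)"
    then show "v \<in> {v\<in>words F N. take (length w) v = w}" using w by (auto simp: words_def)
  qed
  have "(\<Sum>v\<in>{v\<in>words F N. take (length w) v = w}. Ln q v powr t)
      = (\<Sum>u\<in>words F (N - length w). Ln q (w @ u) powr t)"
    unfolding eq by (subst sum.reindex) (auto simp: inj_on_def)
  also have "\<dots> = (\<Sum>u\<in>words F (N - length w). Ln q w powr t * Ln q u powr t)"
    using Ln_pos[OF qp] by (intro sum.cong refl) (auto simp: Ln_append powr_mult less_imp_le)
  also have "\<dots> = Ln q w powr t" using words_sum[OF qp F s1] by (simp add: sum_distrib_left[symmetric])
  finally show ?thesis .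
qed

lemma cover_weight:
  assumes qp: "\<And>i. q i > 0" and F: "finite F" and s1: "(\<Sum>i\<in>F. q i powr t) = 1"
    and cov: "\<And>\<alpha>. (\<And>k. \<alpha> k \<in> F) \<Longrightarrow> \<exists>n. map \<alpha> [0..<n] \<in> W"
  shows "\<exists>W'. finite W' \<and> W' \<subseteq> W \<and> 1 \<le> (\<Sum>w\<in>W'. Ln q w powr t)"
proof -
  obtain N where N: "\<And>v. v \<in> words F N \<Longrightarrow> \<exists>k. take k v \<in> W" using konig[OF F cov] by blast
  define W' where "W' = (\<lambda>(v,k). take k v) ` (words F N \<times> {..N}) \<inter> W"
  have fW: "finite W'" unfolding W'_def using finite_words[OF F] by auto
  have W'prop: "set w \<subseteq> F \<and> length w \<le> N" if "w \<in> W'" for w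
    using that by (auto simp: W'_def words_def dest: in_set_takeD)
  define g where "g v = Ln q v powr t" for v
  have "1 = (\<Sum>v\<in>words F N. g v)" using words_sum[OF qp F s1] by (simp add: g_def)
  also have "\<dots> \<le> (\<Sum>v\<in>words F N. \<Sum>w\<in>W'. if take (length w) v = w then g v else 0)"
  proof (rule sum_mono)
    fix v assume v: "v \<in> words F N"
    obtain k where k: "take k v \<in> W" using N[OF v] by blast
    have lv: "length v = N" using v by (simp add: words_def)
    define w where "w = take (min k N) v"
    have "w = take k v" using lv by (simp add: w_def min_def)
    then have wW: "w \<in> W'" using k v unfolding W'_def by (auto intro!: image_eqI[where x="(v, min k N)"] simp: w_def)
    have tw: "take (length w) v = w" using lv by (simp add: w_def min_def)
    have "g v = (if take (length w) v = w then g v else 0)" using tw by simp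
    also have "\<dots> \<le> (\<Sum>w\<in>W'. if take (length w) v = w then g v else 0)"
      using fW wW by (intro member_le_sum) (auto simp: g_def)
    finally show "g v \<le> (\<Sum>w\<in>W'. if take (length w) v = w then g v else 0)" .
  qed
  also have "\<dots> = (\<Sum>w\<in>W'. \<Sum>v\<in>words F N. if take (length w) v = w then g v else 0)"
    by (rule sum.swap)
  also have "\<dots> = (\<Sum>w\<in>W'. \<Sum>v\<in>{v\<in>words F N. take (length w) v = w}. g v)"
    by (intro sum.cong refl sum.inter_filter[symmetric] finite_words[OF F])
  also have "\<dots> = (\<Sum>w\<in>W'. g w)"
    using group_sum[OF qp F s1] W'prop by (intro sum.cong refl) (simp add: g_def)
  finally show ?thesis using fW unfolding g_def W'_def by blast
qed



lemma Ln_le1: "(\<And>i. q i > 0) \<Longrightarrow> (\<And>i. q i \<le> 1) \<Longrightarrow> Ln q w \<le> 1"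
  using Ln_le_pow[of q 1 w] by simp

lemma count_bound:
  assumes qp: "\<And>i. q i > 0" and iv: "\<And>i. 0 \<le> a i \<and> a i + q i \<le> 1"
    and disj: "\<And>i j. i \<noteq> j \<Longrightarrow> {a i<..<a i + q i} \<inter> {a j<..<a j + q j} = {}"
    and q1: "\<And>i. q i \<le> 1"
    and qm: "0 < qm" "qm \<le> 1" "\<And>i. i \<in> F \<Longrightarrow> qm \<le> q i"
    and t: "0 < t" "t \<le> 1" and D: "0 < D" "D \<le> 1"
    and U: "bounded U" "diameter U \<le> D"
    and G: "finite G" "G \<subseteq> {w. set w \<subseteq> F \<and> Ln q w \<le> D \<and> (w = [] \<or> D < Ln q (butlast w))
                              \<and> gls_cylinder q a w \<inter> U \<noteq> {}}"
  shows "(\<Sum>w\<in>G. Ln q w powr t) \<le> (qm * D) powr (t - 1) * (4 * D)"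
proof -
  have Lp: "Ln q w > 0" for w using Ln_pos qp by blast
  have lower: "qm * D \<le> Ln q w" if w: "w \<in> G" for w
  proof (cases "w = []")
    case True then show ?thesis using qm D by (simp add: mult_le_one)
  next
    case False
    then have wdec: "w = butlast w @ [last w]" by simp
    have "Ln q w = Ln q (butlast w) * q (last w)"
      by (subst wdec) (simp add: Ln_append)
    moreover have "D < Ln q (butlast w)" using G w False by auto
    moreover have "qm \<le> q (last w)" using G w False qm(3) last_in_set by blast
    ultimately show ?thesis using qm D mult_mono[of qm "q (last w)" D "Ln q (butlast w)"]
      by (simp add: less_imp_le mult.commute)
  qed
  have sumL: "(\<Sum>w\<in>G. Ln q w) \<le> 4 * D"
  proof (cases "G = {}")
    case True then show ?thesis using D by simp
  next
    case False
    then obtain w0 where "w0 \<in> G" by blast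
    then obtain x0 where x0: "x0 \<in> U" using G by blast
    have box: "0 \<le> Ln q w \<and> x0 - 2 * D \<le> cc q a w \<and> cc q a w + Ln q w \<le> x0 + 2 * D"
      if w: "w \<in> G" for w
    proof -
      obtain y where y: "y \<in> gls_cylinder q a w" "y \<in> U" using G w by blast
      have "dist y x0 \<le> diameter U" using U(1) y(2) x0 by (rule diameter_bounded_bound)
      then have "\<bar>y - x0\<bar> \<le> D" using U(2) by (simp add: dist_real_def)
      moreover have "cc q a w \<le> y \<and> y \<le> cc q a w + Ln q w" using y(1) by (simp add: cyl_eq[OF qp])
      moreover have "Ln q w \<le> D" using G w by blast
      ultimately show ?thesis using Lp[of w] by linarith
    qed
    have dj: "{cc q a w<..<cc q a w + Ln q w} \<inter> {cc q a w'<..<cc q a w' + Ln q w'} = {}"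
      if w: "w \<in> G" "w' \<in> G" "w \<noteq> w'" for w w'
    proof -
      have noprefix: False if pre: "prefix u v" and ne: "u \<noteq> v" and uG: "u \<in> G" and vG: "v \<in> G" for u v
      proof -
        obtain z where v: "v = u @ z" using pre by (rule prefixE)
        then have z: "z \<noteq> []" using ne by auto
        then have "butlast v = u @ butlast z" using v by (simp add: butlast_append)
        then have "Ln q (butlast v) = Ln q u * Ln q (butlast z)" by (simp add: Ln_append)
        also have "\<dots> \<le> Ln q u" using Lp[of u] Ln_le1[OF qp q1, where w="butlast z"] by (simp add: mult_left_le)
        also have "\<dots> \<le> D" using G uG by blast
        finally have "Ln q (butlast v) \<le> D" .
        moreover have "v \<noteq> []" using v z by simp
        ultimately show False using G vG by auto
      qed
      have "w \<parallel> w'" using noprefix w by (metis parallelI)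
      then obtain p i u j v where ij: "i \<noteq> j" and ws: "w = p @ i # u" "w' = p @ j # v"
        using parallel_decomp by blast
      show ?thesis unfolding ws by (rule branch_disj[OF qp iv disj ij])
    qed
    have "(\<Sum>w\<in>G. Ln q w) \<le> (x0 + 2 * D) - (x0 - 2 * D)"
      using G(1) box dj D by (intro sum_len_le[where c="cc q a"]) auto
    then show ?thesis by simp
  qed
  have "(\<Sum>w\<in>G. Ln q w powr t) \<le> (\<Sum>w\<in>G. (qm * D) powr (t - 1) * Ln q w)"
  proof (rule sum_mono)
    fix w assume w: "w \<in> G"
    have "Ln q w powr t = Ln q w powr (t - 1) * Ln q w"
      using Lp[of w] powr_add[of "Ln q w" "t - 1" 1] by simp
    also have "\<dots> \<le> (qm * D) powr (t - 1) * Ln q w"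
      using Lp[of w] lower[OF w] t qm D by (intro mult_right_mono powr_mono2') auto
    finally show "Ln q w powr t \<le> (qm * D) powr (t - 1) * Ln q w" .
  qed
  also have "\<dots> = (qm * D) powr (t - 1) * (\<Sum>w\<in>G. Ln q w)" by (simp add: sum_distrib_left)
  also have "\<dots> \<le> (qm * D) powr (t - 1) * (4 * D)" using sumL by (intro mult_left_mono) auto
  finally show ?thesis .
qed



lemma powr_subadd:
  fixes x y t :: real
  assumes "0 \<le> x" "0 \<le> y" "0 < t" "t \<le> 1"
  shows "(x + y) powr t \<le> x powr t + y powr t"
proof (cases "x + y = 0")
  case True then show ?thesis using assms by simp
next
  case False
  define s where "s = x + y"
  have s: "s > 0" using False assms s_def by simp
  have hx: "x / s \<le> (x / s) powr t"
  proof -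
    have "(x / s) powr 1 \<le> (x / s) powr t"
      using assms s by (intro powr_mono') (auto simp: s_def)
    then show ?thesis using assms s by (cases "x = 0") auto
  qed
  have hy: "y / s \<le> (y / s) powr t"
  proof -
    have "(y / s) powr 1 \<le> (y / s) powr t"
      using assms s by (intro powr_mono') (auto simp: s_def)
    then show ?thesis using assms s by (cases "y = 0") auto
  qed
  have "1 = x / s + y / s" using s by (simp add: s_def add_divide_distrib[symmetric])
  also have "\<dots> \<le> (x / s) powr t + (y / s) powr t" using hx hy by simp
  also have "\<dots> = (x powr t + y powr t) / s powr t"
    using assms s by (simp add: powr_divide add_divide_distrib)
  finally have "s powr t \<le> x powr t + y powr t" using s by (simp add: field_simps)
  then show ?thesis by (simp add: s_def)
qed

lemma lower_core:
  assumes qp: "\<And>i. q i > 0" and iv: "\<And>i. 0 \<le> a i \<and> a i + q i \<le> 1"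
    and disj: "\<And>i j. i \<noteq> j \<Longrightarrow> {a i<..<a i + q i} \<inter> {a j<..<a j + q j} = {}"
    and qr: "\<And>i. q i \<le> r" and r1: "r < 1"
    and F: "finite F" "F \<noteq> {}" and t: "0 < t" "t \<le> 1"
    and s1: "(\<Sum>i\<in>F. q i powr t) = 1"
  shows "ennreal (1 / (4 * Min (q ` F) powr (t - 1))) \<le> hausdorff_pre t (1/2) (gls_set q a F)"
proof -
  define qm where "qm = Min (q ` F)"
  have qmF: "qm \<in> q ` F" unfolding qm_def using F by (intro Min_in) auto
  have qm_pos: "0 < qm" using qmF qp by auto
  have q1: "q i \<le> 1" for i using qr[of i] r1 by simp
  have qm1: "qm \<le> 1" using qmF q1 by auto
  have qmle: "qm \<le> q i" if "i \<in> F" for i unfolding qm_def using F that by (intro Min_le) auto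
  define K where "K = 4 * qm powr (t - 1)"
  have Kpos: "K > 0" using qm_pos by (simp add: K_def)
  have Lp: "Ln q w > 0" for w using Ln_pos qp by blast
  show ?thesis unfolding hausdorff_pre_def qm_def[symmetric] K_def[symmetric]
  proof (rule INF_greatest)
    fix U assume "U \<in> {U :: nat \<Rightarrow> real set. gls_set q a F \<subseteq> (\<Union>n. U n) \<and>
                   (\<forall>n. bounded (U n) \<and> diameter (U n) \<le> 1/2)}"
    then have cov: "gls_set q a F \<subseteq> (\<Union>n. U n)" and bU: "\<And>n. bounded (U n)"
      and dU: "\<And>n. diameter (U n) \<le> 1/2" by auto
    define d where "d j = diameter (U j)" for j
    have d0: "0 \<le> d j" for j unfolding d_def by (rule diameter_ge_0[OF bU])
    define S where "S = (\<Sum>j. ennreal (d j powr t))"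
    have key: "ennreal 1 \<le> ennreal K * (S + ennreal \<epsilon>)" if eps: "0 < \<epsilon>" "\<epsilon> \<le> 1/2" for \<epsilon>
    proof -
      define e where "e j = (\<epsilon> / 2 ^ Suc j) powr (1 / t)" for j
      have ebase: "0 < \<epsilon> / 2 ^ Suc j" "\<epsilon> / 2 ^ Suc j \<le> 1/4" for j
      proof -
        show "0 < \<epsilon> / 2 ^ Suc j" using eps by simp
        have "(2::real) \<le> 2 ^ Suc j" using one_le_power[of "2::real" j] by simp
        then have "\<epsilon> / 2 ^ Suc j \<le> \<epsilon> / 2" using eps by (intro divide_left_mono) auto
        then show "\<epsilon> / 2 ^ Suc j \<le> 1/4" using eps by linarith
      qed
      have e_pos: "0 < e j" for j using ebase(1)[of j] eps by (simp add: e_def)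
      have e_t: "e j powr t = \<epsilon> / 2 ^ Suc j" for j
        using ebase(1)[of j] t eps by (simp add: e_def powr_powr)
      have e_le: "e j \<le> 1/2" for j
      proof -
        have b1: "\<epsilon> / 2 ^ Suc j \<le> 1" using ebase(2)[of j] by linarith
        have b2: "1 \<le> 1 / t" using t by simp
        have "e j \<le> \<epsilon> / 2 ^ Suc j" unfolding e_def
          by (rule powr_le_one_le[OF ebase(1) b1 b2])
        then show ?thesis using ebase(2)[of j] by linarith
      qed
      define D where "D j = d j + e j" for j
      have D_pos: "0 < D j" for j using d0[of j] e_pos[of j] by (simp add: D_def)
      have D_le: "D j \<le> 1" for j using dU[of j] e_le[of j] by (simp add: D_def d_def)
      define W where "W j = {w. set w \<subseteq> F \<and> Ln q w \<le> D j \<and> (w = [] \<or> D j < Ln q (butlast w))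
                              \<and> gls_cylinder q a w \<inter> U j \<noteq> {}}" for j
      have covW: "\<exists>n. map \<alpha> [0..<n] \<in> (\<Union>j. W j)" if \<alpha>: "\<And>k. \<alpha> k \<in> F" for \<alpha>
      proof -
        define P where "P n = map \<alpha> [0..<n]" for n
        have "gls_point q a \<alpha> \<in> gls_set q a F" unfolding gls_set_def using \<alpha> by blast
        then obtain j where xj: "gls_point q a \<alpha> \<in> U j" using cov by blast
        obtain n1 where n1: "r ^ n1 < D j" using real_arch_pow_inv[OF D_pos r1] by blast
        have "Ln q (P n1) \<le> r ^ n1" using Ln_le_pow[OF qp qr, where ws="P n1"] by (simp add: P_def)
        then have ex: "\<exists>n. Ln q (P n) \<le> D j" using n1 by (meson less_imp_le order_trans)
        define n0 where "n0 = (LEAST n. Ln q (P n) \<le> D j)"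
        have n0: "Ln q (P n0) \<le> D j" unfolding n0_def by (rule LeastI_ex[OF ex])
        have n0b: "P n0 = [] \<or> D j < Ln q (butlast (P n0))"
        proof (cases n0)
          case 0 then show ?thesis by (simp add: P_def)
        next
          case (Suc m)
          have "\<not> Ln q (P m) \<le> D j" using Suc unfolding n0_def
            by (metis Suc Suc_n_not_le_n n0_def not_less_Least order.refl le_SucI linorder_not_le)
          moreover have "butlast (P n0) = P m" by (simp add: P_def Suc)
          ultimately show ?thesis by simp
        qed
        have "gls_point q a \<alpha> \<in> gls_cylinder q a (P n0)"
          unfolding P_def by (rule gls_point_in[OF qp iv qr r1])
        moreover have "set (P n0) \<subseteq> F" using \<alpha> by (auto simp: P_def)
        ultimately have "P n0 \<in> W j" using n0 n0b xj unfolding W_def by blast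
        then show ?thesis unfolding P_def by blast
      qed
      obtain W' where W': "finite W'" "W' \<subseteq> (\<Union>j. W j)" "1 \<le> (\<Sum>w\<in>W'. Ln q w powr t)"
        using cover_weight[OF qp F(1) s1 covW] by blast
      define jf where "jf w = (SOME j. w \<in> W j)" for w
      have jf: "w \<in> W (jf w)" if "w \<in> W'" for w
        unfolding jf_def using W'(2) that by (metis (mono_tags, lifting) UN_E someI_ex subsetD)
      define J where "J = jf ` W'"
      have fJ: "finite J" using W'(1) by (simp add: J_def)
      have "(\<Sum>w\<in>W'. Ln q w powr t) = (\<Sum>j\<in>J. \<Sum>w\<in>{w. w \<in> W' \<and> jf w = j}. Ln q w powr t)"
        using W'(1) fJ by (intro sum.group[symmetric]) (auto simp: J_def)
      also have "\<dots> \<le> (\<Sum>j\<in>J. (qm * D j) powr (t - 1) * (4 * D j))"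
      proof (rule sum_mono)
        fix j assume "j \<in> J"
        show "(\<Sum>w\<in>{w. w \<in> W' \<and> jf w = j}. Ln q w powr t) \<le> (qm * D j) powr (t - 1) * (4 * D j)"
        proof (rule count_bound[OF qp iv disj q1 qm_pos qm1 qmle t D_pos D_le bU])
          show "diameter (U j) \<le> D j" using e_pos[of j] by (simp add: D_def d_def)
          show "finite {w. w \<in> W' \<and> jf w = j}" using W'(1) by simp
          show "{w. w \<in> W' \<and> jf w = j} \<subseteq> {w. set w \<subseteq> F \<and> Ln q w \<le> D j \<and>
             (w = [] \<or> D j < Ln q (butlast w)) \<and> gls_cylinder q a w \<inter> U j \<noteq> {}}"
            using jf unfolding W_def by blast
        qed
      qed
      also have "\<dots> = (\<Sum>j\<in>J. K * D j powr t)"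
      proof (rule sum.cong[OF refl])
        fix j
        have "(qm * D j) powr (t - 1) * (4 * D j) = 4 * qm powr (t - 1) * (D j powr (t - 1) * D j)"
          using qm_pos D_pos[of j] by (simp add: powr_mult)
        also have "D j powr (t - 1) * D j = D j powr t"
          using D_pos[of j] powr_add[of "D j" "t - 1" 1] by simp
        finally show "(qm * D j) powr (t - 1) * (4 * D j) = K * D j powr t" by (simp add: K_def)
      qed
      also have "\<dots> \<le> (\<Sum>j\<in>J. K * (d j powr t + e j powr t))"
      proof (intro sum_mono mult_left_mono)
        fix j
        show "D j powr t \<le> d j powr t + e j powr t"
          using powr_subadd[of "d j" "e j" t] d0[of j] e_pos[of j] t by (simp add: D_def)
      qed (use Kpos in simp)
      also have "\<dots> = K * (\<Sum>j\<in>J. d j powr t + e j powr t)" by (simp add: sum_distrib_left)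
      finally have real1: "1 \<le> K * (\<Sum>j\<in>J. d j powr t + e j powr t)" using W'(3) by linarith
      have "ennreal 1 \<le> ennreal (K * (\<Sum>j\<in>J. d j powr t + e j powr t))"
        using real1 by (simp add: ennreal_leI)
      also have "\<dots> = ennreal K * ennreal (\<Sum>j\<in>J. d j powr t + e j powr t)"
        using Kpos by (intro ennreal_mult) (auto intro!: sum_nonneg)
      also have "\<dots> = ennreal K * (\<Sum>j\<in>J. ennreal (d j powr t) + ennreal (e j powr t))"
      proof -
        have "ennreal (\<Sum>j\<in>J. d j powr t + e j powr t) = (\<Sum>j\<in>J. ennreal (d j powr t + e j powr t))"
          by (rule sum_ennreal[symmetric]) simp
        also have "\<dots> = (\<Sum>j\<in>J. ennreal (d j powr t) + ennreal (e j powr t))"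
          by (intro sum.cong refl ennreal_plus) auto
        finally show ?thesis by simp
      qed
      also have "\<dots> = ennreal K * ((\<Sum>j\<in>J. ennreal (d j powr t)) + (\<Sum>j\<in>J. ennreal (e j powr t)))"
        by (simp add: sum.distrib)
      also have "\<dots> \<le> ennreal K * (S + ennreal \<epsilon>)"
      proof (intro mult_left_mono add_mono)
        show "(\<Sum>j\<in>J. ennreal (d j powr t)) \<le> S" unfolding S_def
          by (rule sum_le_suminf[OF summableI fJ]) simp
        have ser: "(\<lambda>j. \<epsilon> / 2 ^ Suc j) sums \<epsilon>"
        proof -
          have "(\<lambda>j. \<epsilon> * (1/2) ^ Suc j) sums (\<epsilon> * 1)" by (rule sums_mult[OF power_half_series])
          moreover have "(\<lambda>j. \<epsilon> * (1/2) ^ Suc j) = (\<lambda>j. \<epsilon> / 2 ^ Suc j)"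
            by (rule ext) (simp add: power_one_over)
          ultimately show ?thesis by simp
        qed
        have "(\<Sum>j\<in>J. ennreal (e j powr t)) \<le> (\<Sum>j. ennreal (e j powr t))"
          by (rule sum_le_suminf[OF summableI fJ]) simp
        also have "\<dots> = (\<Sum>j. ennreal (\<epsilon> / 2 ^ Suc j))"
          by (simp only: e_t)
        also have "\<dots> = ennreal (\<Sum>j. \<epsilon> / 2 ^ Suc j)"
          using eps ser by (intro suminf_ennreal2) (auto simp: sums_iff)
        also have "(\<Sum>j. \<epsilon> / 2 ^ Suc j) = \<epsilon>" using ser by (simp add: sums_iff)
        finally show "(\<Sum>j\<in>J. ennreal (e j powr t)) \<le> ennreal \<epsilon>" .
      qed auto
      finally show ?thesis .
    qed
    show "ennreal (1 / K) \<le> (\<Sum>n. ennreal (diameter (U n) powr t))"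
    proof (cases "S = top")
      case True then show ?thesis by (simp add: S_def d_def)
    next
      case False
      then obtain s0 where s0: "S = ennreal s0" "0 \<le> s0" by (cases S) auto
      have "1 \<le> K * s0"
      proof (rule ccontr)
        assume "\<not> 1 \<le> K * s0"
        then have lt: "K * s0 < 1" by simp
        define \<epsilon> where "\<epsilon> = min (1/2) ((1 - K * s0) / (2 * K))"
        have ep: "0 < \<epsilon>" "\<epsilon> \<le> 1/2" using lt Kpos by (auto simp: \<epsilon>_def)
        have e1: "S + ennreal \<epsilon> = ennreal (s0 + \<epsilon>)" using s0 ep by (simp add: ennreal_plus)
        have e2: "ennreal K * ennreal (s0 + \<epsilon>) = ennreal (K * (s0 + \<epsilon>))"
          using s0 ep Kpos by (intro ennreal_mult[symmetric]) auto
        have "ennreal 1 \<le> ennreal (K * (s0 + \<epsilon>))"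
          using key[OF ep] unfolding e1 e2 .
        then have "1 \<le> K * (s0 + \<epsilon>)" using Kpos s0 ep by (simp add: ennreal_le_iff)
        moreover have "K * \<epsilon> \<le> (1 - K * s0) / 2"
        proof -
          have "\<epsilon> \<le> (1 - K * s0) / (2 * K)" by (simp add: \<epsilon>_def)
          then have "K * \<epsilon> \<le> K * ((1 - K * s0) / (2 * K))" using Kpos by (intro mult_left_mono) auto
          then show ?thesis using Kpos by simp
        qed
        ultimately show False using lt by (simp add: algebra_simps)
      qed
      then have "1 / K \<le> s0" using Kpos by (simp add: field_simps)
      then show ?thesis using s0 by (simp add: S_def d_def ennreal_leI)
    qed
  qed
qed



lemma ennreal_fin_le_infsum:
  fixes f :: "'a \<Rightarrow> ennreal"
  assumes "finite G" "G \<subseteq> A"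
  shows "sum f G \<le> infsum f A"
proof -
  have "infsum f A = (SUP F\<in>{F. finite F \<and> F \<subseteq> A}. sum f F)"
    by (rule nonneg_infsum_complete) simp
  moreover have "sum f G \<le> (SUP F\<in>{F. finite F \<and> F \<subseteq> A}. sum f F)"
    using assms by (intro SUP_upper) auto
  ultimately show ?thesis by simp
qed

lemma words_fin_bound:
  assumes qp: "\<And>i. q i > 0"
    and sig: "(\<Sum>\<^sub>\<infinity>i\<in>V. ennreal (q i powr t)) = \<sigma>"
  shows "finite G \<Longrightarrow> G \<subseteq> words V n \<Longrightarrow> (\<Sum>w\<in>G. ennreal (Ln q w powr t)) \<le> \<sigma> ^ n"
proof (induction n arbitrary: G)
  case 0
  then have "G \<subseteq> {[]}" by (auto simp: words_def)
  then have "(\<Sum>w\<in>G. ennreal (Ln q w powr t)) \<le> (\<Sum>w\<in>{[]}. ennreal (Ln q w powr t))"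
    by (intro sum_mono2) auto
  then show ?case by simp
next
  case (Suc n)
  define G1 where "G1 = hd ` G"
  define G2 where "G2 = tl ` G"
  have fG1: "finite G1" "finite G2" using Suc.prems by (auto simp: G1_def G2_def)
  have wG: "w \<noteq> [] \<and> set w \<subseteq> V \<and> length w = Suc n" if "w \<in> G" for w
    using that Suc.prems by (auto simp: words_def)
  have G1V: "G1 \<subseteq> V"
  proof
    fix i assume "i \<in> G1"
    then obtain w where w: "w \<in> G" "i = hd w" by (auto simp: G1_def)
    then show "i \<in> V" using wG[OF w(1)] hd_in_set by blast
  qed
  have G2W: "G2 \<subseteq> words V n"
  proof
    fix v assume "v \<in> G2"
    then obtain w where w: "w \<in> G" "v = tl w" by (auto simp: G2_def)
    have "set (tl w) \<subseteq> set w" by (cases w) auto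
    then show "v \<in> words V n" using wG[OF w(1)] w(2) by (auto simp: words_def)
  qed
  have sub: "G \<subseteq> (\<lambda>(i,v). i # v) ` (G1 \<times> G2)"
  proof
    fix w assume w: "w \<in> G"
    then have "w \<noteq> []" using Suc.prems by (auto simp: words_def)
    then have "w = hd w # tl w" by simp
    then show "w \<in> (\<lambda>(i,v). i # v) ` (G1 \<times> G2)" using w unfolding G1_def G2_def
      by (metis (no_types, lifting) case_prod_conv image_eqI mem_Sigma_iff)
  qed
  have inj: "inj_on (\<lambda>(i,v). i # v) (G1 \<times> G2)" by (auto simp: inj_on_def)
  have "(\<Sum>w\<in>G. ennreal (Ln q w powr t)) \<le> (\<Sum>w\<in>(\<lambda>(i,v). i # v) ` (G1 \<times> G2). ennreal (Ln q w powr t))"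
    using sub fG1 by (intro sum_mono2) auto
  also have "\<dots> = (\<Sum>(i,v)\<in>G1 \<times> G2. ennreal (Ln q (i # v) powr t))"
    by (subst sum.reindex[OF inj]) (simp add: case_prod_unfold)
  also have "\<dots> = (\<Sum>(i,v)\<in>G1 \<times> G2. ennreal (q i powr t) * ennreal (Ln q v powr t))"
    using qp Ln_pos[OF qp] by (intro sum.cong refl) (auto simp: powr_mult less_imp_le ennreal_mult)
  also have "\<dots> = (\<Sum>i\<in>G1. ennreal (q i powr t)) * (\<Sum>v\<in>G2. ennreal (Ln q v powr t))"
    by (simp only: sum_product sum.cartesian_product)
  also have "\<dots> \<le> \<sigma> * \<sigma> ^ n"
  proof (rule mult_mono)
    show "(\<Sum>i\<in>G1. ennreal (q i powr t)) \<le> \<sigma>"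
      unfolding sig[symmetric] by (rule ennreal_fin_le_infsum[OF fG1(1) G1V])
    show "(\<Sum>v\<in>G2. ennreal (Ln q v powr t)) \<le> \<sigma> ^ n" using Suc.IH fG1 G2W by blast
  qed (rule zero_le)+
  finally show ?case by (simp only: power_Suc)
qed

lemma upper:
  assumes qp: "\<And>i. q i > 0" and iv: "\<And>i. 0 \<le> a i \<and> a i + q i \<le> 1"
    and qr: "\<And>i. q i \<le> r" and r1: "r < 1"
    and Vinf: "infinite V"
    and sig: "(\<Sum>\<^sub>\<infinity>i\<in>V. ennreal (q i powr t)) < 1"
  shows "hausdorff_measure t (gls_set q a V) = 0"
proof -
  define \<sigma> where "\<sigma> = (\<Sum>\<^sub>\<infinity>i\<in>V. ennreal (q i powr t))"
  have Lp: "Ln q w > 0" for w using Ln_pos qp by blast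
  have Lge: "\<not> Ln q w < 0" for w using Lp[of w] by simp
  have r0: "0 \<le> r" using qp[of 0] qr[of 0] by simp
  have "\<sigma> < top" using sig unfolding \<sigma>_def using order.strict_trans[OF _ ennreal_one_less_top] by blast
  then obtain s where s12: "0 \<le> s" "\<sigma> = ennreal s" using less_top_ennreal by blast
  have s: "\<sigma> = ennreal s" "0 \<le> s" "s < 1" using s12 sig unfolding \<sigma>_def by auto
  have bound: "hausdorff_pre t \<delta> (gls_set q a V) \<le> \<sigma> ^ n" if n: "n \<ge> 1" "r ^ n \<le> \<delta>" for \<delta> n
  proof -
    have cW: "countable (words V n)" by simp
    have iW: "infinite (words V n)"
    proof
      assume fin: "finite (words V n)"
      have "(\<lambda>i. replicate n i) ` V \<subseteq> words V n" by (auto simp: words_def)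
      moreover have "inj_on (\<lambda>i. replicate n i) V" using n(1)
        by (auto simp: inj_on_def)
      ultimately have "finite V" using fin finite_imageD finite_subset by blast
      then show False using Vinf by simp
    qed
    define e where "e = from_nat_into (words V n)"
    have be: "bij_betw e UNIV (words V n)" unfolding e_def by (rule bij_betw_from_nat_into[OF cW iW])
    define U where "U k = gls_cylinder q a (e k)" for k
    have Uin: "U \<in> {U :: nat \<Rightarrow> real set. gls_set q a V \<subseteq> (\<Union>n. U n) \<and>
                   (\<forall>n. bounded (U n) \<and> diameter (U n) \<le> \<delta>)}"
    proof (safe)
      fix x assume "x \<in> gls_set q a V"
      then obtain \<alpha> where x: "x = gls_point q a \<alpha>" and \<alpha>: "\<And>k. \<alpha> k \<in> V" by (auto simp: gls_set_def)
      have "map \<alpha> [0..<n] \<in> words V n" using \<alpha> by (auto simp: words_def)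
      then obtain k where k: "e k = map \<alpha> [0..<n]" using be by (metis bij_betw_iff_bijections)
      have "x \<in> U k" unfolding U_def k x by (rule gls_point_in[OF qp iv qr r1])
      then show "x \<in> (\<Union>n. U n)" by blast
    next
      fix k show "bounded (U k)" by (simp add: U_def cyl_eq[OF qp])
    next
      fix k
      have ek: "e k \<in> words V n" using be by (auto simp: bij_betw_def)
      have "diameter (U k) = Ln q (e k)" using Lp[of "e k"] by (simp add: U_def cyl_eq[OF qp])
      also have "\<dots> \<le> r ^ length (e k)" by (rule Ln_le_pow[OF qp qr])
      also have "\<dots> = r ^ n" using ek by (simp add: words_def)
      finally show "diameter (U k) \<le> \<delta>" using n by simp
    qed
    have "hausdorff_pre t \<delta> (gls_set q a V) \<le> (\<Sum>k. ennreal (diameter (U k) powr t))"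
      unfolding hausdorff_pre_def by (rule INF_lower[OF Uin])
    also have "\<dots> \<le> \<sigma> ^ n"
    proof (rule suminf_le_const[OF summableI])
      fix N
      have inj: "inj_on e {..<N}" using be by (auto simp: bij_betw_def inj_on_def)
      have "(\<Sum>k<N. ennreal (diameter (U k) powr t)) = (\<Sum>k<N. ennreal (Ln q (e k) powr t))"
        by (intro sum.cong refl) (simp add: U_def cyl_eq[OF qp] Lge)
      also have "\<dots> = (\<Sum>w\<in>e ` {..<N}. ennreal (Ln q w powr t))"
        by (subst sum.reindex[OF inj]) simp
      also have "\<dots> \<le> \<sigma> ^ n"
        using be by (intro words_fin_bound[OF qp \<sigma>_def[symmetric]]) (auto simp: bij_betw_def)
      finally show "(\<Sum>k<N. ennreal (diameter (U k) powr t)) \<le> \<sigma> ^ n" .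
    qed
    finally show ?thesis .
  qed
  have zero: "hausdorff_pre t \<delta> (gls_set q a V) = 0" if d: "\<delta> > 0" for \<delta>
  proof -
    obtain N0 where N0: "r ^ N0 < \<delta>" using real_arch_pow_inv[OF d r1] by blast
    have "hausdorff_pre t \<delta> (gls_set q a V) \<le> 0"
    proof (rule ennreal_le_epsilon)
      fix \<epsilon> :: real assume \<epsilon>: "0 < \<epsilon>"
      obtain m where m: "s ^ m < \<epsilon>" using real_arch_pow_inv[OF \<epsilon> s(3)] by blast
      define n where "n = m + N0 + 1"
      have "r ^ n \<le> r ^ N0" unfolding n_def using r0 qr r1 by (intro power_decreasing) auto
      then have "hausdorff_pre t \<delta> (gls_set q a V) \<le> \<sigma> ^ n" using N0 by (intro bound) (auto simp: n_def)
      also have "\<dots> = ennreal (s ^ n)" using s by (simp add: ennreal_power)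
      also have "s ^ n \<le> s ^ m" unfolding n_def using s by (intro power_decreasing) auto
      then have "ennreal (s ^ n) \<le> ennreal \<epsilon>" using m by (intro ennreal_leI) simp
      finally show "hausdorff_pre t \<delta> (gls_set q a V) \<le> 0 + ennreal \<epsilon>" by simp
    qed
    then show ?thesis by simp
  qed
  show ?thesis unfolding hausdorff_measure_def using zero by simp
qed



lemma infsum_ennreal_SUP:
  fixes f :: "'a \<Rightarrow> ennreal"
  shows "infsum f A = (SUP G\<in>{G. finite G \<and> G \<subseteq> A}. sum f G)"
  by (rule nonneg_infsum_complete) simp

lemma finsum_le_one:
  fixes q :: "nat \<Rightarrow> real"
  assumes qp: "\<And>i. q i > 0" and qs: "q sums 1" and G: "finite G"
  shows "sum q G \<le> 1"
proof -
  have "sum q G \<le> suminf q" using qs qp G by (intro sum_le_suminf) (auto simp: sums_iff less_imp_le)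
  then show ?thesis using qs by (simp add: sums_iff)
qed

lemma finsum_less_one:
  fixes q :: "nat \<Rightarrow> real"
  assumes qp: "\<And>i. q i > 0" and qs: "q sums 1" and G: "finite G"
  shows "sum q G < 1"
proof -
  obtain k where k: "k \<notin> G" using G by (meson ex_new_if_finite infinite_UNIV_nat)
  have "sum q (insert k G) \<le> 1" using finsum_le_one[OF qp qs] G by simp
  then show ?thesis using k G qp[of k] by simp
qed

lemma q_le_r:
  fixes q :: "nat \<Rightarrow> real"
  assumes qp: "\<And>i. q i > 0" and qs: "q sums 1"
  shows "q i \<le> max (1 - q 0) (1 - q 1)"
proof -
  have two: "q i + q j \<le> 1" if "i \<noteq> j" for i j
    using finsum_le_one[OF qp qs, of "{i, j}"] that by simp
  show ?thesis
  proof (cases "i = 0")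
    case True then show ?thesis using two[of 0 1] by simp
  next
    case False then show ?thesis using two[of i 0] by simp
  qed
qed

theorem theorem3:
  fixes q a :: "nat \<Rightarrow> real" and V :: "nat set"
  assumes q_pos: "\<And>i. q i > 0"
    and q_sum: "q sums 1"
    and intervals: "\<And>i. 0 \<le> a i \<and> a i + q i \<le> 1"
    and disj: "\<And>i j. i \<noteq> j \<Longrightarrow> {a i<..<a i + q i} \<inter> {a j<..<a j + q j} = {}"
    and V_inf: "infinite V"
  shows "hausdorff_dim (gls_set q a V) =
         Sup {ereal x | x. (\<Sum>\<^sub>\<infinity>i\<in>V. ennreal (q i powr x)) \<ge> 1}"
proof -
  define r where "r = max (1 - q 0) (1 - q 1)"
  have qr: "q i \<le> r" for i unfolding r_def by (rule q_le_r[OF q_pos q_sum])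
  have r1: "r < 1" using q_pos[of 0] q_pos[of 1] by (simp add: r_def)
  have rpos: "0 < r" using q_pos[of 0] qr[of 0] by simp
  define f where "f x = (\<Sum>\<^sub>\<infinity>i\<in>V. ennreal (q i powr x))" for x
  define X where "X = {ereal x | x. (\<Sum>\<^sub>\<infinity>i\<in>V. ennreal (q i powr x)) \<ge> 1}"
  define s where "s = Sup X"
  have X_iff: "ereal x \<in> X \<longleftrightarrow> 1 \<le> f x" for x unfolding X_def f_def by auto
  have s_ge0: "0 \<le> s"
  proof -
    obtain i where i: "i \<in> V" using V_inf infinite_imp_nonempty by blast
    have "(\<Sum>j\<in>{i}. ennreal (q j powr 0)) \<le> f 0"
      unfolding f_def using i by (intro ennreal_fin_le_infsum) auto
    then have "1 \<le> f 0" using q_pos[of i] by simp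
    then have "ereal 0 \<in> X" using X_iff by blast
    then show ?thesis unfolding s_def by (metis Sup_upper zero_ereal_def)
  qed
  have X_le1: "y \<le> 1" if "1 \<le> f y" for y
  proof (rule ccontr)
    assume "\<not> y \<le> 1"
    then have y1: "y > 1" by simp
    have "f y \<le> ennreal (r powr (y - 1))"
      unfolding f_def infsum_ennreal_SUP
    proof (rule SUP_least)
      fix G assume G: "G \<in> {G. finite G \<and> G \<subseteq> V}"
      have "(\<Sum>i\<in>G. ennreal (q i powr y)) = ennreal (\<Sum>i\<in>G. q i powr y)"
        by (rule sum_ennreal) simp
      also have "(\<Sum>i\<in>G. q i powr y) \<le> (\<Sum>i\<in>G. r powr (y - 1) * q i)"
      proof (rule sum_mono)
        fix i
        have "q i powr y = q i powr (y - 1) * q i"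
          using q_pos[of i] powr_add[of "q i" "y - 1" 1] by simp
        also have "\<dots> \<le> r powr (y - 1) * q i"
          using q_pos[of i] qr[of i] y1 by (intro mult_right_mono powr_mono2) auto
        finally show "q i powr y \<le> r powr (y - 1) * q i" .
      qed
      also have "\<dots> = r powr (y - 1) * sum q G" by (simp add: sum_distrib_left)
      also have "\<dots> \<le> r powr (y - 1) * 1"
        using finsum_le_one[OF q_pos q_sum] G by (intro mult_left_mono) auto
      finally show "(\<Sum>i\<in>G. ennreal (q i powr y)) \<le> ennreal (r powr (y - 1))"
        by (simp add: ennreal_leI)
    qed
    moreover have "r powr (y - 1) < 1"
      using powr_less_mono2[of "y - 1" r 1] rpos r1 y1 by simp
    ultimately have "f y < 1" by (simp add: le_less_trans)
    then show False using that by simp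
  qed
  have s_le1: "s \<le> 1"
    unfolding s_def
  proof (rule Sup_least)
    fix z assume "z \<in> X"
    then obtain y where "z = ereal y" "1 \<le> f y" unfolding X_def f_def by auto
    then show "z \<le> 1" using X_le1 by simp
  qed
  have upper_bd: "hausdorff_dim (gls_set q a V) \<le> s"
  proof (rule dense_ge)
    fix z assume z: "s < z"
    show "hausdorff_dim (gls_set q a V) \<le> z"
    proof (cases z)
      case (real t)
      have "ereal t \<notin> X" using z real unfolding s_def by (meson Sup_upper not_le)
      then have ft: "f t < 1" using X_iff by (simp add: not_le)
      have "ereal 0 \<le> ereal t" using s_ge0 z real by (metis order.trans less_imp_le zero_ereal_def)
      then have t0: "0 \<le> t" by simp
      have "hausdorff_measure t (gls_set q a V) = 0"
        using upper[where q=q and a=a and r=r and V=V, OF q_pos intervals qr r1 V_inf] ft unfolding f_def by blast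
      then have "hausdorff_dim (gls_set q a V) \<le> ereal t"
        unfolding hausdorff_dim_def using t0 by (intro INF_lower2[of t]) auto
      then show ?thesis using real by simp
    next
      case PInf then show ?thesis by simp
    next
      case MInf then show ?thesis using z by simp
    qed
  qed
  have lower_bd: "s \<le> hausdorff_dim (gls_set q a V)"
    unfolding hausdorff_dim_def
  proof (rule INF_greatest)
    fix s1 assume "s1 \<in> {s. 0 \<le> s \<and> hausdorff_measure s (gls_set q a V) = 0}"
    then have s1: "0 \<le> s1" "hausdorff_measure s1 (gls_set q a V) = 0" by auto
    show "s \<le> ereal s1"
    proof (rule ccontr)
      assume "\<not> s \<le> ereal s1"
      then have "ereal s1 < Sup X" by (simp add: s_def)
      then obtain z where zX: "z \<in> X" and zs: "ereal s1 < z" by (auto simp: less_Sup_iff)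
      then obtain y where zy: "z = ereal y" and fy: "1 \<le> f y" unfolding X_def f_def by auto
      have sy: "s1 < y" using zs zy by simp
      have y1: "y \<le> 1" using X_le1[OF fy] .
      define s0 where "s0 = (s1 + y) / 2"
      have s0: "s1 < s0" "s0 < y" "0 < s0" using sy s1 by (auto simp: s0_def)
      define c where "c = r powr (y - s0)"
      have c: "0 < c" "c < 1"
        using rpos r1 s0 powr_less_mono2[of "y - s0" r 1] by (auto simp: c_def)
      have "ennreal c < 1" using c by simp
      then have "ennreal c < f y" using fy by (rule less_le_trans)
      then obtain G where G: "finite G" "G \<subseteq> V" and cG: "ennreal c < (\<Sum>i\<in>G. ennreal (q i powr y))"
        unfolding f_def infsum_ennreal_SUP by (auto simp: less_SUP_iff)
      have cG': "c < (\<Sum>i\<in>G. q i powr y)"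
        using cG c by (simp add: sum_ennreal ennreal_less_iff)
      have "(\<Sum>i\<in>G. q i powr y) \<le> (\<Sum>i\<in>G. c * q i powr s0)"
      proof (rule sum_mono)
        fix i
        have "q i powr y = q i powr (y - s0) * q i powr s0"
          using q_pos[of i] powr_add[of "q i" "y - s0" s0] by simp
        also have "\<dots> \<le> c * q i powr s0"
          unfolding c_def using q_pos[of i] qr[of i] s0 by (intro mult_right_mono powr_mono2) auto
        finally show "q i powr y \<le> c * q i powr s0" .
      qed
      also have "\<dots> = c * (\<Sum>i\<in>G. q i powr s0)" by (simp add: sum_distrib_left)
      finally have h: "(\<Sum>i\<in>G. q i powr y) \<le> c * (\<Sum>i\<in>G. q i powr s0)" .
      then have "c * 1 < c * (\<Sum>i\<in>G. q i powr s0)" using cG' by linarith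
      then have gs0: "1 < (\<Sum>i\<in>G. q i powr s0)" using c by (simp add: mult_less_cancel_left_pos)
      have Gne: "G \<noteq> {}" using gs0 by auto
      define g where "g x = (\<Sum>i\<in>G. q i powr x)" for x
      have "g 1 = sum q G" unfolding g_def using q_pos by (intro sum.cong refl) (simp add: less_imp_le)
      then have g1: "g 1 < 1" using finsum_less_one[OF q_pos q_sum G(1)] by simp
      have gc: "continuous_on {s0..1} g"
        unfolding g_def using q_pos by (intro continuous_intros) (auto simp: less_le)
      obtain t where t: "s0 \<le> t" "t \<le> 1" "g t = 1"
        using IVT2'[of g 1 1 s0] g1 gs0 gc s0 y1 by (auto simp: g_def)
      have tpos: "0 < t" using t s0 by simp
      have core: "ennreal (1 / (4 * Min (q ` G) powr (t - 1))) \<le> hausdorff_pre t (1/2) (gls_set q a G)"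
        using lower_core[where q=q and a=a and r=r and F=G and t=t, OF q_pos intervals disj qr r1 G(1) Gne tpos t(2)] t(3) by (simp add: g_def)
      have sub: "gls_set q a G \<subseteq> gls_set q a V" using G(2) unfolding gls_set_def by blast
      have m1: "hausdorff_pre t (1/2) (gls_set q a G) \<le> hausdorff_pre t (1/2) (gls_set q a V)"
        unfolding hausdorff_pre_def using sub by (intro INF_superset_mono) auto
      have m2: "hausdorff_pre t (1/2) (gls_set q a V) \<le> hausdorff_pre s1 (1/2) (gls_set q a V)"
        unfolding hausdorff_pre_def
      proof (rule INF_mono)
        fix U assume U: "U \<in> {U :: nat \<Rightarrow> real set. gls_set q a V \<subseteq> (\<Union>n. U n) \<and>
                   (\<forall>n. bounded (U n) \<and> diameter (U n) \<le> 1/2)}"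
        have "(\<Sum>n. ennreal (diameter (U n) powr t)) \<le> (\<Sum>n. ennreal (diameter (U n) powr s1))"
        proof (rule suminf_le[OF _ summableI summableI])
          fix n
          have bn: "bounded (U n)" and dn: "diameter (U n) \<le> 1/2" using U by auto
          have "0 \<le> diameter (U n)" "diameter (U n) \<le> 1"
            using diameter_ge_0[OF bn] dn by auto
          then have "diameter (U n) powr t \<le> diameter (U n) powr s1"
            using s0 t by (intro powr_mono') auto
          then show "ennreal (diameter (U n) powr t) \<le> ennreal (diameter (U n) powr s1)"
            by (rule ennreal_leI)
        qed
        then show "\<exists>U'\<in>{U :: nat \<Rightarrow> real set. gls_set q a V \<subseteq> (\<Union>n. U n) \<and>
                   (\<forall>n. bounded (U n) \<and> diameter (U n) \<le> 1/2)}.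
              (\<Sum>n. ennreal (diameter (U' n) powr t)) \<le> (\<Sum>n. ennreal (diameter (U n) powr s1))"
          using U by blast
      qed
      have m3: "hausdorff_pre s1 (1/2) (gls_set q a V) \<le> hausdorff_measure s1 (gls_set q a V)"
        unfolding hausdorff_measure_def by (rule SUP_upper) simp
      have "ennreal (1 / (4 * Min (q ` G) powr (t - 1))) \<le> 0"
        using core m1 m2 m3 s1(2) by (metis order_trans)
      moreover have "0 < Min (q ` G)" using G(1) Gne q_pos by (subst Min_gr_iff) auto
      ultimately show False by simp
    qed
  qed
  show ?thesis using upper_bd lower_bd unfolding s_def X_def by simp
qed

end
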